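(* (i) For any $\alpha\in(0,\infty)$ and $\lambda>0$ there exist $C_1=C_1(d,\alpha,\lambda)$, $C_2=C_2(d,\alpha)$ such that for all $t>0$, $x\in\mathbb R^d$: $\xi_{\lambda,0}(t,x)\le C_1\eta_{\alpha,\alpha}(t,x)$, and for all $\gamma\ge0$, $t>0$: $\int_{\mathbb R^d}\eta_{\alpha,\gamma}(t,x)dx\le C_2t^{(\gamma-\alpha)/2}$; and there is $C_3=C_3(d,\alpha)>0$ such that for all $t,s>0$, $x\in\mathbb R^d$, $\gamma\in[0,\alpha]$: $\int_{\mathbb R^d}\eta_{\alpha,\gamma}(t,x-z)\eta_{\alpha,\alpha}(s,z)dz\ge C_3\eta_{\alpha,\gamma}(t+s,x)$. (ii) For $0<\alpha\le\beta$ and all $t,s>0$, $x,y$: $\eta_{\alpha,0}(t,x)\eta_{\beta,0}(s,y)\le2^{d+\alpha}(\eta_{\beta,0}(t,x)+\eta_{\beta,0}(s,y))\eta_{\alpha,0}(t+s,x+y)$. Moreover there is $C_4=C_4(d,\alpha,\beta)$ such that for all $\gamma_1,\gamma_2>\beta-2$, all $t<s$ and $x,y$, $$\int_t^s\!\!\int_{\mathbb R^d}\eta_{\alpha,\gamma_1}(s-r,y-z)\eta_{\beta,\gamma_2}(r-t,z-x)dz\,dr\le C_4\mathcal B\big(\tfrac{\gamma_1-\beta}2+1,\tfrac{\gamma_2-\beta}2+1\big)\eta_{\alpha,2+\gamma_1+\gamma_2-\beta}(s-t,y-x).$$ (iii) For $\alpha\in(0,2)$ there is $C_5=C_5(d,\alpha,\lambda)$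 such that for all $\gamma_1>-2$, $\gamma_2>\alpha-2$, $$\int_t^s\!\!\int\xi_{\lambda,\gamma_1}(r-t,z-x)\eta_{\alpha,\gamma_2}(s-r,y-z)dz\,dr\le C_5\mathcal B\big(\tfrac{\gamma_1}2+1,\tfrac{\gamma_2-\alpha}2+1\big)\eta_{\alpha,2+\gamma_1+\gamma_2}(s-t,y-x).$$ (iv) For $\lambda>0$: $\int\xi_{\lambda,0}(t,x-y)\xi_{\lambda,0}(s,y)dy=(\pi\lambda^{-1})^{d/2}\xi_{\lambda,0}(t+s,x)$, and for $\gamma_1,\gamma_2>-2$, $$\int_t^s\!\!\int\xi_{\lambda,\gamma_1}(r-t,z-x)\xi_{\lambda,\gamma_2}(s-r,y-z)dz\,dr=(\pi\lambda^{-1})^{d/2}\mathcal B\big(\tfrac{\gamma_1}2+1,\tfrac{\gamma_2}2+1\big)\xi_{\lambda,2+\gamma_1+\gamma_2}(s-t,y-x).$$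
   Context: $d\ge2$. For $\gamma,\lambda\in\mathbb R$, $t>0$, $x\in\mathbb R^d$: $\xi_{\lambda,\gamma}(t,x):=t^{(\gamma-d)/2}e^{-\lambda|x|^2/t}$, $\eta_{\alpha,\gamma}(t,x):=t^{\gamma/2}(|x|+t^{1/2})^{-d-\alpha}$. $\mathcal B(a,b):=\int_0^1(1-s)^{a-1}s^{b-1}ds$ is the Beta function. In (ii)–(iv) $0\le t<s$ and $x,y\in\mathbb R^d$ are arbitrary. *)

theory Defs
  imports "HOL-Analysis.Analysis"
begin

text \<open>The dimension d is DIM('a) of the euclidean space type 'a.\<close>

definition xi :: "real \<Rightarrow> real \<Rightarrow> real \<Rightarrow> 'a::euclidean_space \<Rightarrow> real" where
  "xi lam gam t x = t powr ((gam - real DIM('a)) / 2) * exp (- lam * (norm x)\<^sup>2 / t)"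

definition eta :: "real \<Rightarrow> real \<Rightarrow> real \<Rightarrow> 'a::euclidean_space \<Rightarrow> real" where
  "eta alpha gam t x = t powr (gam / 2) * (norm x + sqrt t) powr (- (real DIM('a) + alpha))"

end

theory Submission
  imports Defs "HOL-Probability.Probability"
begin


lemma gauss1:
  fixes mu a :: real assumes mu: "mu > 0"
  shows "(\<integral>\<^sup>+x. ennreal (exp (- mu * (x - a)\<^sup>2)) \<partial>lborel) = ennreal (sqrt (pi / mu))"
proof -
  define sg where "sg = sqrt (1 / (2 * mu))"
  have sg2: "sg\<^sup>2 = 1 / (2*mu)" using mu by (simp add: sg_def)
  have e: "exp (- mu * (x - a)\<^sup>2) = sqrt (pi / mu) * normal_density a sg x" for x
  proof -
    have "2 * pi * sg\<^sup>2 = pi / mu" using mu sg2 by (simp add: field_simps)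
    moreover have "-(x - a)\<^sup>2 / (2 * sg\<^sup>2) = - mu * (x - a)\<^sup>2" using mu by (simp add: sg2)
    ultimately show ?thesis using mu by (simp add: normal_density_def)
  qed
  have "(\<integral>\<^sup>+x. ennreal (exp (- mu * (x - a)\<^sup>2)) \<partial>lborel)
      = (\<integral>\<^sup>+x. ennreal (sqrt (pi / mu)) * ennreal (normal_density a sg x) \<partial>lborel)"
    by (intro nn_integral_cong) (subst e, rule ennreal_mult, use mu in auto)
  also have "\<dots> = ennreal (sqrt (pi / mu)) * (\<integral>\<^sup>+x. ennreal (normal_density a sg x) \<partial>lborel)"
    by (rule nn_integral_cmult) measurable
  also have "(\<integral>\<^sup>+x. ennreal (normal_density a sg x) \<partial>lborel) = 1"
    using mu by (subst nn_integral_eq_integral) (auto simp: sg_def)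
  finally show ?thesis by simp
qed

lemma norm_sq_basis:
  fixes z :: "'a::euclidean_space"
  shows "(norm z)\<^sup>2 = (\<Sum>b\<in>Basis. (z \<bullet> b)\<^sup>2)"
  unfolding power2_norm_eq_inner by (subst euclidean_inner) (simp add: power2_eq_square)

lemma gaussd:
  fixes mu :: real and c :: "'a::euclidean_space" assumes mu: "mu > 0"
  shows "(\<integral>\<^sup>+z. ennreal (exp (- mu * (norm (z - c))\<^sup>2)) \<partial>(lborel::'a measure))
      = ennreal ((pi / mu) powr (real DIM('a) / 2))"
proof -
  have e: "ennreal (exp (- mu * (norm (z - c))\<^sup>2)) = (\<Prod>b\<in>Basis. ennreal (exp (- mu * (z \<bullet> b - c \<bullet> b)\<^sup>2)))" for z
  proof -
    have "exp (- mu * (norm (z - c))\<^sup>2) = exp (\<Sum>b\<in>Basis. - mu * (z \<bullet> b - c \<bullet> b)\<^sup>2)"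
      by (simp add: norm_sq_basis[of "z - c"] sum_distrib_left inner_diff_left sum_negf)
    also have "\<dots> = (\<Prod>b\<in>Basis. exp (- mu * (z \<bullet> b - c \<bullet> b)\<^sup>2))" by (rule exp_sum) simp
    finally show ?thesis by (simp add: prod_ennreal)
  qed
  have "(\<integral>\<^sup>+z. ennreal (exp (- mu * (norm (z - c))\<^sup>2)) \<partial>(lborel::'a measure))
     = (\<integral>\<^sup>+z. (\<Prod>b\<in>Basis. (\<lambda>b x. ennreal (exp (- mu * (x - c \<bullet> b)\<^sup>2))) b (z \<bullet> b)) \<partial>(lborel::'a measure))"
    by (intro nn_integral_cong) (rule e)
  also have "\<dots> = (\<Prod>b\<in>(Basis::'a set). (\<integral>\<^sup>+x. ennreal (exp (- mu * (x - c \<bullet> b)\<^sup>2)) \<partial>lborel))"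
    by (rule nn_integral_lborel_prod) auto
  also have "\<dots> = (\<Prod>b\<in>(Basis::'a set). ennreal (sqrt (pi / mu)))"
    using gauss1[OF mu] by simp
  also have "\<dots> = ennreal (sqrt (pi / mu) ^ DIM('a))" using mu by (simp add: ennreal_power)
  also have "sqrt (pi / mu) ^ DIM('a) = (pi / mu) powr (real DIM('a) / 2)"
    using mu by (simp add: sqrt_def root_powr_inverse powr_realpow[symmetric] powr_powr)
  finally show ?thesis .
qed

lemma alg_ident: "a > 0 \<Longrightarrow> b > (0::real) \<Longrightarrow> k = a / (a + b) \<Longrightarrow> X / a + (Y - 2 * Z + X) / b = Y / (a + b) + (a + b) / (a * b) * (X - 2 * k * Z + k\<^sup>2 * Y)"
proof -
  assume a: "a > 0" and b: "b > 0" and k: "k = a / (a + b)"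
  have ab: "a + b \<noteq> 0" using a b by simp
  have kk: "k * (a + b) = a" using ab k by simp
  have 1: "(a + b) / (a * b) * k = 1 / b" using a b kk by (simp add: field_simps)
  have 2: "(a + b) / (a * b) * k\<^sup>2 = k / b" proof - have "(a + b) / (a * b) * k\<^sup>2 = ((a + b) / (a * b) * k) * k" by (simp add: power2_eq_square) also have "\<dots> = 1 / b * k" by (simp only: 1) finally show ?thesis by simp qed
  have 3: "Y / (a + b) + k / b * Y = Y / b"
  proof -
    have "Y / (a + b) + k / b * Y = (Y + a / b * Y) / (a + b)" unfolding k by (simp add: divide_inverse algebra_simps)
    also have "Y + a / b * Y = (a + b) * (Y / b)" using b by (simp add: field_simps)
    also have "(a + b) * (Y / b) / (a + b) = Y / b" using ab by simp
    finally show ?thesis .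
  qed
  have "(a + b) / (a * b) * (X - 2 * k * Z + k\<^sup>2 * Y) = (a + b) / (a * b) * X - 2 * ((a + b) / (a * b) * k) * Z + ((a + b) / (a * b) * k\<^sup>2) * Y"
    by (simp add: algebra_simps)
  also have "\<dots> = (a + b) / (a * b) * X - 2 / b * Z + k / b * Y" by (simp only: 1 2)
  finally have 4: "(a + b) / (a * b) * (X - 2 * k * Z + k\<^sup>2 * Y) = (a + b) / (a * b) * X - 2 / b * Z + k / b * Y" .
  have 5: "(a + b) / (a * b) * X = X / a + X / b" using a b by (simp add: field_simps)
  show ?thesis unfolding 4 5 using 3 by (simp add: diff_divide_distrib add_divide_distrib algebra_simps)
qed

lemma sq_ident:
  fixes z p q :: "'a::real_inner" and a b :: real
  assumes a: "a > 0" and b: "b > 0"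
  shows "(norm (z - p))\<^sup>2 / a + (norm (q - z))\<^sup>2 / b
    = (norm (q - p))\<^sup>2 / (a + b) + (a + b) / (a * b) * (norm (z - (p + (a / (a + b)) *\<^sub>R (q - p))))\<^sup>2"
proof -
  define w where "w = z - p"
  define v where "v = q - p"
  have 1: "q - z = v - w" by (simp add: w_def v_def)
  have 2: "z - (p + (a / (a + b)) *\<^sub>R (q - p)) = w - (a / (a + b)) *\<^sub>R v" by (simp add: w_def v_def)
  define k where "k = a / (a + b)"
  have n1: "(norm (v - w))\<^sup>2 = v \<bullet> v - 2 * (w \<bullet> v) + w \<bullet> w"
    unfolding power2_norm_eq_inner by (simp add: inner_diff_left inner_diff_right inner_commute[of v w])
  have n2: "(norm (w - k *\<^sub>R v))\<^sup>2 = w \<bullet> w - 2 * k * (w \<bullet> v) + k\<^sup>2 * (v \<bullet> v)"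
    unfolding power2_norm_eq_inner by (simp add: inner_diff_left inner_diff_right inner_commute[of v w] power2_eq_square algebra_simps)
  have alg: "X / a + (Y - 2 * Z + X) / b = Y / (a + b) + (a + b) / (a * b) * (X - 2 * k * Z + k\<^sup>2 * Y)" for X Y Z :: real
    using alg_ident[OF a b k_def] .
  have "(norm w)\<^sup>2 / a + (norm (v - w))\<^sup>2 / b
    = (norm v)\<^sup>2 / (a + b) + (a + b) / (a * b) * (norm (w - (a / (a + b)) *\<^sub>R v))\<^sup>2"
    unfolding k_def[symmetric] n1 n2 by (simp add: alg power2_norm_eq_inner[symmetric])
  then show ?thesis unfolding 1 2 by (simp only: w_def v_def)
qed

lemma gconv:
  fixes p q :: "'a::euclidean_space" and lam a b :: real
  assumes l: "lam > 0" and a: "a > 0" and b: "b > 0"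
  shows "(\<integral>\<^sup>+z. ennreal (exp (- lam * (norm (z - p))\<^sup>2 / a) * exp (- lam * (norm (q - z))\<^sup>2 / b)) \<partial>(lborel::'a measure))
    = ennreal ((pi * a * b / (lam * (a + b))) powr (real DIM('a) / 2) * exp (- lam * (norm (q - p))\<^sup>2 / (a + b)))"
proof -
  define mu where "mu = lam * (a + b) / (a * b)"
  define c where "c = p + (a / (a + b)) *\<^sub>R (q - p)"
  have mu: "mu > 0" using l a b by (simp add: mu_def)
  have e: "exp (- lam * (norm (z - p))\<^sup>2 / a) * exp (- lam * (norm (q - z))\<^sup>2 / b)
     = exp (- lam * (norm (q - p))\<^sup>2 / (a + b)) * exp (- mu * (norm (z - c))\<^sup>2)" for z
  proof -
    have "- lam * (norm (z - p))\<^sup>2 / a + - lam * (norm (q - z))\<^sup>2 / b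
        = - lam * ((norm (z - p))\<^sup>2 / a + (norm (q - z))\<^sup>2 / b)" by (simp add: algebra_simps)
    also have "\<dots> = - lam * (norm (q - p))\<^sup>2 / (a + b) + - mu * (norm (z - c))\<^sup>2"
    proof -
      have "- lam * (C / (a + b) + (a + b) / (a * b) * N) = - lam * C / (a + b) + - (lam * (a + b) / (a * b)) * N" for C N
        using a b by (simp add: field_simps)
      then show ?thesis unfolding sq_ident[OF a b, of z p q] c_def mu_def by simp
    qed
    finally show ?thesis by (simp add: exp_add[symmetric])
  qed
  have "(\<integral>\<^sup>+z. ennreal (exp (- lam * (norm (z - p))\<^sup>2 / a) * exp (- lam * (norm (q - z))\<^sup>2 / b)) \<partial>(lborel::'a measure))
     = (\<integral>\<^sup>+z. ennreal (exp (- lam * (norm (q - p))\<^sup>2 / (a + b))) * ennreal (exp (- mu * (norm (z - c))\<^sup>2)) \<partial>(lborel::'a measure))"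
    by (intro nn_integral_cong) (subst e, rule ennreal_mult, auto)
  also have "\<dots> = ennreal (exp (- lam * (norm (q - p))\<^sup>2 / (a + b))) * (\<integral>\<^sup>+z. ennreal (exp (- mu * (norm (z - c))\<^sup>2)) \<partial>(lborel::'a measure))"
    by (rule nn_integral_cmult) measurable
  also have "\<dots> = ennreal (exp (- lam * (norm (q - p))\<^sup>2 / (a + b))) * ennreal ((pi / mu) powr (real DIM('a) / 2))"
    by (subst gaussd[OF mu]) simp
  also have "pi / mu = pi * a * b / (lam * (a + b))" by (simp add: mu_def)
  finally show ?thesis by (simp add: ennreal_mult[symmetric] mult.commute)
qed

lemma xi0: "xi lam 0 t x = t powr (- real DIM('a) / 2) * exp (- lam * (norm (x::'a::euclidean_space))\<^sup>2 / t)"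
  by (simp add: xi_def)

lemma xi_gam: "t > 0 \<Longrightarrow> xi lam g t x = t powr (g / 2) * xi lam 0 t (x::'a::euclidean_space)"
  by (simp add: xi_def powr_add[symmetric] diff_divide_distrib)

lemma eta_gam: "t > 0 \<Longrightarrow> eta al g t x = t powr (g / 2) * eta al 0 t (x::'a::euclidean_space)"
  by (simp add: eta_def)

lemma xiconv:
  fixes p q :: "'a::euclidean_space" and lam a b :: real
  assumes l: "lam > 0" and a: "a > 0" and b: "b > 0"
  shows "(\<integral>\<^sup>+z. ennreal (xi lam 0 a (z - p) * xi lam 0 b (q - z)) \<partial>(lborel::'a measure))
    = ennreal ((pi / lam) powr (real DIM('a) / 2) * xi lam 0 (a + b) (q - p))"
proof -
  define e where "e = real DIM('a) / 2"
  have "(\<integral>\<^sup>+z. ennreal (xi lam 0 a (z - p) * xi lam 0 b (q - z)) \<partial>(lborel::'a measure))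
     = (\<integral>\<^sup>+z. ennreal (a powr (-e) * b powr (-e)) * ennreal (exp (- lam * (norm (z - p))\<^sup>2 / a) * exp (- lam * (norm (q - z))\<^sup>2 / b)) \<partial>(lborel::'a measure))"
    by (intro nn_integral_cong) (simp add: xi0 e_def ennreal_mult[symmetric] algebra_simps)
  also have "\<dots> = ennreal (a powr (-e) * b powr (-e)) * (\<integral>\<^sup>+z. ennreal (exp (- lam * (norm (z - p))\<^sup>2 / a) * exp (- lam * (norm (q - z))\<^sup>2 / b)) \<partial>(lborel::'a measure))"
    by (rule nn_integral_cmult) measurable
  also have "\<dots> = ennreal (a powr (-e) * b powr (-e) * ((pi * a * b / (lam * (a + b))) powr e * exp (- lam * (norm (q - p))\<^sup>2 / (a + b))))"
    by (subst gconv[OF l a b]) (simp add: e_def ennreal_mult[symmetric])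
  also have "a powr (-e) * b powr (-e) * ((pi * a * b / (lam * (a + b))) powr e * exp (- lam * (norm (q - p))\<^sup>2 / (a + b)))
     = (pi / lam) powr e * xi lam 0 (a + b) (q - p)"
  proof -
    have "(pi * a * b / (lam * (a + b))) powr e = (pi / lam) powr e * a powr e * b powr e * (a + b) powr (-e)"
      using l a b by (simp add: powr_mult powr_divide powr_minus divide_simps)
    moreover have "a powr (-e) * a powr e = 1" "b powr (-e) * b powr e = 1"
      using a b by (simp_all add: powr_add[symmetric])
    ultimately show ?thesis by (simp add: xi0 e_def) (simp add: algebra_simps)
  qed
  finally show ?thesis by (simp add: e_def)
qed



lemma Beta_pos: "a > 0 \<Longrightarrow> b > 0 \<Longrightarrow> Beta a b > (0::real)"
  by (simp add: Beta_def Gamma_real_pos)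

lemma beta01:
  fixes a b :: real assumes a: "a > -1" and b: "b > -1"
  shows "(\<integral>\<^sup>+u. ennreal (u powr a * (1 - u) powr b) * indicator {0<..<1} u \<partial>lborel) = ennreal (Beta (a + 1) (b + 1))"
proof -
  have h: "((\<lambda>u. u powr a * (1 - u) powr b) has_integral Beta (a + 1) (b + 1)) {0..1}"
    using has_integral_Beta_real[of "a + 1" "b + 1"] a b by simp
  have "(\<integral>\<^sup>+u. ennreal (u powr a * (1 - u) powr b) * indicator {0..1} u \<partial>lborel) = ennreal (Beta (a + 1) (b + 1))"
    by (rule nn_integral_has_integral_lebesgue'[OF _ h]) auto
  moreover have "ennreal (u powr a * (1 - u) powr b) * indicator {0..1} u = ennreal (u powr a * (1 - u) powr b) * indicator {0<..<1} u" for u :: real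
    by (cases "u = 0 \<or> u = 1") (auto simp: indicator_def)
  ultimately show ?thesis by simp
qed

lemma beta_nn:
  fixes a b t s :: real assumes a: "a > -1" and b: "b > -1" and ts: "t < s"
  shows "(\<integral>\<^sup>+r\<in>{t<..<s}. ennreal ((r - t) powr a * (s - r) powr b) \<partial>lborel)
     = ennreal ((s - t) powr (a + b + 1) * Beta (a + 1) (b + 1))"
proof -
  define c where "c = s - t"
  have c: "c > 0" using ts by (simp add: c_def)
  have "(\<integral>\<^sup>+r\<in>{t<..<s}. ennreal ((r - t) powr a * (s - r) powr b) \<partial>lborel)
     = ennreal \<bar>c\<bar> * (\<integral>\<^sup>+u. ennreal ((t + c * u - t) powr a * (s - (t + c * u)) powr b) * indicator {t<..<s} (t + c * u) \<partial>lborel)"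
    by (rule nn_integral_real_affine) (use c in auto)
  also have "(\<integral>\<^sup>+u. ennreal ((t + c * u - t) powr a * (s - (t + c * u)) powr b) * indicator {t<..<s} (t + c * u) \<partial>lborel)
     = (\<integral>\<^sup>+u. ennreal (c powr (a + b)) * (ennreal (u powr a * (1 - u) powr b) * indicator {0<..<1} u) \<partial>lborel)"
  proof (intro nn_integral_cong)
    fix u :: real
    have ind: "indicator {t<..<s} (t + c * u) = (indicator {0<..<1} u :: ennreal)"
    proof -
      have 1: "t < t + c * u \<longleftrightarrow> 0 < u" using c by (simp add: zero_less_mult_iff)
      have "t + c * u < s \<longleftrightarrow> c * u < c * 1" by (simp add: c_def algebra_simps)
      also have "\<dots> \<longleftrightarrow> u < 1" using c by (rule mult_less_cancel_left_pos)
      finally show ?thesis using 1 by (simp add: indicator_def)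
    qed
    show "ennreal ((t + c * u - t) powr a * (s - (t + c * u)) powr b) * indicator {t<..<s} (t + c * u)
       = ennreal (c powr (a + b)) * (ennreal (u powr a * (1 - u) powr b) * indicator {0<..<1} u)"
    proof (cases "0 < u \<and> u < 1")
      case True
      have "s - (t + c * u) = c * (1 - u)" by (simp add: c_def algebra_simps)
      then have "(t + c * u - t) powr a * (s - (t + c * u)) powr b = c powr (a + b) * (u powr a * (1 - u) powr b)"
        using True c by (simp add: powr_mult powr_add)
      then show ?thesis unfolding ind using True c by (simp add: ennreal_mult[symmetric] indicator_def)
    next case False then have "indicator {0<..<1} u = (0::ennreal)" by (simp add: indicator_def) then show ?thesis unfolding ind by simp qed
  qed
  also have "\<dots> = ennreal (c powr (a + b)) * (\<integral>\<^sup>+u. ennreal (u powr a * (1 - u) powr b) * indicator {0<..<1} u \<partial>lborel)"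
    by (rule nn_integral_cmult) measurable
  also have "\<dots> = ennreal (c powr (a + b) * Beta (a + 1) (b + 1))"
    using beta01[OF a b] c Beta_pos[of "a + 1" "b + 1"] a b by (simp add: ennreal_mult[symmetric])
  finally show ?thesis
  proof -
    assume "(\<integral>\<^sup>+r\<in>{t<..<s}. ennreal ((r - t) powr a * (s - r) powr b) \<partial>lborel) = ennreal \<bar>c\<bar> * ennreal (c powr (a + b) * Beta (a + 1) (b + 1))"
    moreover have "Beta (a + 1) (b + 1) \<ge> 0" using a b Beta_pos[of "a + 1" "b + 1"] by simp
    moreover have "c * c powr (a + b) = c powr (a + b + 1)" using c by (simp add: powr_add)
    ultimately show ?thesis using c by (simp add: ennreal_mult[symmetric] c_def mult.assoc)
  qed
qed

lemma outer_bound: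
  fixes t s p q Q :: real
  assumes ts: "t < s" and p: "p > -1" and q: "q > -1" and Q: "Q \<ge> 0"
    and F: "\<And>r. t < r \<Longrightarrow> r < s \<Longrightarrow> F r \<le> ennreal (Q * ((r - t) powr p * (s - r) powr q))"
  shows "(\<integral>\<^sup>+r\<in>{t<..<s}. F r \<partial>lborel) \<le> ennreal (Q * ((s - t) powr (p + q + 1) * Beta (p + 1) (q + 1)))"
proof -
  have "(\<integral>\<^sup>+r\<in>{t<..<s}. F r \<partial>lborel) \<le> (\<integral>\<^sup>+r. ennreal Q * (ennreal ((r - t) powr p * (s - r) powr q) * indicator {t<..<s} r) \<partial>lborel)"
    by (intro nn_integral_mono) (auto simp: indicator_def ennreal_mult[symmetric] Q intro: F)
  also have "\<dots> = ennreal Q * (\<integral>\<^sup>+r\<in>{t<..<s}. ennreal ((r - t) powr p * (s - r) powr q) \<partial>lborel)"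
    by (rule nn_integral_cmult) measurable
  also have "\<dots> = ennreal (Q * ((s - t) powr (p + q + 1) * Beta (p + 1) (q + 1)))"
    using Q p q Beta_pos[of "p + 1" "q + 1"] by (simp add: beta_nn[OF p q ts] ennreal_mult[symmetric])
  finally show ?thesis .
qed



lemma geo_term:
  fixes h al D :: real and k n :: nat
  assumes h: "h > 0" and Dn: "D = real n"
  shows "(2 ^ k * h) powr (- (D + al)) * (2 ^ Suc k * h) ^ n = 2 ^ n * (h powr (- al)) * (2 powr (- al)) ^ k"
proof -
  have pos: "2 ^ k * h > 0" using h by simp
  have "(2 ^ Suc k * h) ^ n = 2 ^ n * (2 ^ k * h) ^ n" by (simp add: power_mult_distrib)
  also have "(2 ^ k * h) ^ n = (2 ^ k * h) powr D" using pos by (simp add: Dn powr_realpow)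
  finally have 1: "(2 ^ Suc k * h) ^ n = 2 ^ n * (2 ^ k * h) powr D" .
  have "(2 ^ k * h) powr (- (D + al)) * (2 ^ k * h) powr D = (2 ^ k * h) powr (- al)"
    using pos by (simp add: powr_add[symmetric])
  also have "\<dots> = (2 ^ k) powr (- al) * h powr (- al)" using h by (simp add: powr_mult)
  also have "(2 ^ k :: real) powr (- al) = (2 powr (- al)) ^ k"
    by (simp add: powr_realpow[symmetric] powr_powr powr_power mult.commute)
  finally have 2: "(2 ^ k * h) powr (- (D + al)) * (2 ^ k * h) powr D = (2 powr (- al)) ^ k * h powr (- al)" .
  have "(2 ^ k * h) powr (- (D + al)) * (2 ^ Suc k * h) ^ n = 2 ^ n * ((2 ^ k * h) powr (- (D + al)) * (2 ^ k * h) powr D)"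
    unfolding 1 by (simp only: mult_ac)
  also have "\<dots> = 2 ^ n * ((2 powr (- al)) ^ k * h powr (- al))" by (simp only: 2)
  finally show ?thesis by (simp only: mult_ac)
qed

lemma eta_int:
  fixes al :: real assumes al: "al > 0"
  shows "\<exists>K\<ge>0. \<forall>t>0. \<forall>c::'a::euclidean_space.
     (\<integral>\<^sup>+z. ennreal ((dist c z + sqrt t) powr (- (real DIM('a) + al))) \<partial>lborel) \<le> ennreal (K * t powr (- al / 2))"
proof -
  define D where "D = real DIM('a)"
  define q :: real where "q = 2 powr (- al)"
  define V where "V = unit_ball_vol D"
  have q0: "0 < q" by (simp add: q_def)
  have "2 powr (- al) < 2 powr 0" by (rule powr_less_mono) (use al in auto)
  then have q1: "q < 1" by (simp add: q_def)
  have V: "V \<ge> 0" by (simp add: V_def D_def)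
  define K where "K = V * 2 ^ DIM('a) / (1 - q)"
  have K: "K \<ge> 0" using V q1 by (simp add: K_def)
  show ?thesis
  proof (intro exI[of _ K] conjI allI impI K)
    fix t :: real and c :: 'a
    assume t: "t > 0"
    define h where "h = sqrt t"
    have h: "h > 0" using t by (simp add: h_def)
    define g where "g = (\<lambda>k z. ennreal ((2 ^ k * h) powr (- (D + al))) * indicator (ball c (2 ^ Suc k * h)) z)"
    have pw: "ennreal ((dist c z + h) powr (- (D + al))) \<le> (\<Sum>k. g k z)" for z
    proof -
      define u where "u = dist c z + h"
      have uh: "u \<ge> h" by (simp add: u_def)
      obtain n where n: "u / h < 2 ^ n" using real_arch_pow[of 2 "u / h"] by auto
      then have "u < 2 ^ n * h" using h by (simp add: field_simps)
      then obtain k where k: "\<forall>i<k. \<not> u < 2 ^ i * h" "u < 2 ^ k * h"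
        using ex_least_nat_le[of "\<lambda>i. u < 2 ^ i * h" n] by blast
      have "k \<noteq> 0" proof assume "k = 0" then show False using k(2) uh by simp qed
      then obtain m where m: "k = Suc m" by (cases k) auto
      have lo: "2 ^ m * h \<le> u" using k(1) m by (simp add: not_less)
      have inb: "z \<in> ball c (2 ^ Suc m * h)" using k(2) m h by (simp add: u_def)
      have "(dist c z + h) powr (- (D + al)) \<le> (2 ^ m * h) powr (- (D + al))"
        unfolding u_def[symmetric] by (rule powr_mono2') (use lo h al in \<open>auto simp: D_def\<close>)
      then have "ennreal ((dist c z + h) powr (- (D + al))) \<le> g m z"
        using inb by (simp add: g_def ennreal_leI)
      also have "g m z = (\<Sum>i\<in>{m}. g i z)" by simp
      also have "\<dots> \<le> (\<Sum>i. g i z)" by (rule sum_le_suminf) auto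
      finally show ?thesis .
    qed
    have "(\<integral>\<^sup>+z. ennreal ((dist c z + sqrt t) powr (- (real DIM('a) + al))) \<partial>lborel)
        \<le> (\<integral>\<^sup>+z. (\<Sum>k. g k z) \<partial>lborel)"
      by (intro nn_integral_mono) (use pw in \<open>simp add: h_def D_def\<close>)
    also have "\<dots> = (\<Sum>k. \<integral>\<^sup>+z. g k z \<partial>lborel)"
    proof (rule nn_integral_suminf)
      fix k
      have [measurable]: "ball c (2 ^ Suc k * h) \<in> sets lborel" by simp
      show "g k \<in> borel_measurable lborel" unfolding g_def by measurable
    qed
    also have "\<dots> = (\<Sum>k. ennreal (V * 2 ^ DIM('a) * h powr (- al) * q ^ k))"
    proof (intro suminf_cong)
      fix k
      have "(\<integral>\<^sup>+z. g k z \<partial>lborel) = ennreal ((2 ^ k * h) powr (- (D + al))) * emeasure lborel (ball c (2 ^ Suc k * h))"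
        unfolding g_def by (rule nn_integral_cmult_indicator) simp
      also have "emeasure lborel (ball c (2 ^ Suc k * h)) = ennreal (V * (2 ^ Suc k * h) ^ DIM('a))"
        using h by (simp add: emeasure_ball V_def D_def)
      also have "ennreal ((2 ^ k * h) powr (- (D + al))) * ennreal (V * (2 ^ Suc k * h) ^ DIM('a))
          = ennreal (V * ((2 ^ k * h) powr (- (D + al)) * (2 ^ Suc k * h) ^ DIM('a)))"
        using V h by (simp add: ennreal_mult[symmetric] algebra_simps)
      also have "(2 ^ k * h) powr (- (D + al)) * (2 ^ Suc k * h) ^ DIM('a) = 2 ^ DIM('a) * (h powr (- al)) * q ^ k"
        unfolding q_def by (rule geo_term[OF h]) (simp add: D_def)
      finally show "(\<integral>\<^sup>+z. g k z \<partial>lborel) = ennreal (V * 2 ^ DIM('a) * h powr (- al) * q ^ k)"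
        by (simp add: algebra_simps)
    qed
    also have "\<dots> = ennreal (\<Sum>k. V * 2 ^ DIM('a) * h powr (- al) * q ^ k)"
      by (rule suminf_ennreal2) (use V q0 q1 in \<open>auto intro!: summable_mult summable_geometric\<close>)
    also have "(\<Sum>k. V * 2 ^ DIM('a) * h powr (- al) * q ^ k) = V * 2 ^ DIM('a) * h powr (- al) * (1 / (1 - q))"
      by (subst suminf_mult) (use q0 q1 in \<open>auto simp: suminf_geometric summable_geometric\<close>)
    also have "\<dots> = K * t powr (- al / 2)"
    proof -
      have "h powr (- al) = t powr (- al / 2)"
        using t by (simp add: h_def powr_half_sqrt[symmetric] powr_powr)
      then show ?thesis by (simp add: K_def)
    qed
    finally show "(\<integral>\<^sup>+z. ennreal ((dist c z + sqrt t) powr (- (real DIM('a) + al))) \<partial>lborel) \<le> ennreal (K * t powr (- al / 2))" .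
  qed
qed



lemma powr_neg_le_2:
  fixes A E P :: real assumes A: "A > 0" and E: "E > 0" and EA: "E \<le> 2 * A" and P: "P \<ge> 0"
  shows "A powr (- P) \<le> 2 powr P * E powr (- P)"
proof -
  have "(2 * A) powr (- P) \<le> E powr (- P)" by (rule powr_mono2') (use A E EA P in auto)
  moreover have "(2 * A) powr (- P) = 2 powr (- P) * A powr (- P)" using A by (simp add: powr_mult)
  moreover have "2 powr P * 2 powr (- P) = (1::real)" by (simp add: powr_add[symmetric])
  ultimately have "2 powr P * (2 powr (- P) * A powr (- P)) \<le> 2 powr P * E powr (- P)"
    by (simp add: mult_left_mono)
  then show ?thesis using \<open>2 powr P * 2 powr (- P) = 1\<close> by (simp add: mult.assoc[symmetric])
qed

lemma key_real:
  fixes A B E D al be :: real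
  assumes A: "A > 0" and B: "B > 0" and E: "E > 0" and EAB: "E \<le> A + B" and D: "D \<ge> 0"
    and al: "0 < al" and ab: "al \<le> be"
  shows "A powr (- (D + al)) * B powr (- (D + be))
     \<le> 2 powr (D + al) * (A powr (- (D + be)) + B powr (- (D + be))) * E powr (- (D + al))"
proof (cases "B \<le> A")
  case True
  have "A powr (- (D + al)) \<le> 2 powr (D + al) * E powr (- (D + al))"
    by (rule powr_neg_le_2) (use A E EAB True D al in auto)
  then have "A powr (- (D + al)) * B powr (- (D + be)) \<le> 2 powr (D + al) * E powr (- (D + al)) * B powr (- (D + be))"
    by (rule mult_right_mono) simp
  also have "\<dots> \<le> 2 powr (D + al) * (A powr (- (D + be)) + B powr (- (D + be))) * E powr (- (D + al))"
    by (simp add: algebra_simps)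
  finally show ?thesis .
next
  case False
  have 1: "B powr (- (D + al)) \<le> 2 powr (D + al) * E powr (- (D + al))"
    by (rule powr_neg_le_2) (use B E EAB False D al in auto)
  have 2: "A powr (be - al) \<le> B powr (be - al)" by (rule powr_mono2) (use A False ab in auto)
  have "A powr (- (D + al)) * B powr (- (D + be)) = A powr (- (D + be)) * (A powr (be - al) * B powr (- (D + be)))"
    using A by (simp add: powr_add[symmetric])
  also have "\<dots> \<le> A powr (- (D + be)) * (B powr (be - al) * B powr (- (D + be)))"
    using 2 by (intro mult_left_mono mult_right_mono) auto
  also have "B powr (be - al) * B powr (- (D + be)) = B powr (- (D + al))"
    by (subst powr_add[symmetric]) (simp add: algebra_simps)
  also have "A powr (- (D + be)) * B powr (- (D + al)) \<le> A powr (- (D + be)) * (2 powr (D + al) * E powr (- (D + al)))"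
    using 1 by (intro mult_left_mono) auto
  also have "\<dots> \<le> 2 powr (D + al) * (A powr (- (D + be)) + B powr (- (D + be))) * E powr (- (D + al))"
    by (simp add: algebra_simps)
  finally show ?thesis .
qed

lemma pos_ns: "t > 0 \<Longrightarrow> 0 < norm v + sqrt t"
  by (simp add: add_nonneg_pos)

lemma eta0: "t > 0 \<Longrightarrow> eta al 0 t x = (norm (x::'a::euclidean_space) + sqrt t) powr (- (real DIM('a) + al))"
  by (simp add: eta_def)

lemma eta_pw:
  fixes x y :: "'a::euclidean_space"
  assumes al: "0 < al" and ab: "al \<le> be" and t: "t > 0" and s: "s > 0"
  shows "eta al 0 t x * eta be 0 s y
     \<le> 2 powr (real DIM('a) + al) * (eta be 0 t x + eta be 0 s y) * eta al 0 (t + s) (x + y)"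
proof -
  have "norm (x + y) + sqrt (t + s) \<le> (norm x + sqrt t) + (norm y + sqrt s)"
    using norm_triangle_ineq[of x y] sqrt_add_le_add_sqrt[of t s] t s by simp
  then have "(norm x + sqrt t) powr (- (real DIM('a) + al)) * (norm y + sqrt s) powr (- (real DIM('a) + be))
     \<le> 2 powr (real DIM('a) + al) * ((norm x + sqrt t) powr (- (real DIM('a) + be)) + (norm y + sqrt s) powr (- (real DIM('a) + be)))
        * (norm (x + y) + sqrt (t + s)) powr (- (real DIM('a) + al))"
    by (intro key_real) (use t s al ab in \<open>auto intro: pos_ns\<close>)
  then show ?thesis using t s by (simp add: eta0)
qed



lemma polyexp:
  fixes P lam :: real assumes P: "P > 0" and l: "lam > 0"
  shows "\<exists>K>0. \<forall>u\<ge>0. (1 + u) powr P \<le> K * exp (lam * u\<^sup>2)"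
proof -
  define m where "m = max 2 (P / lam)"
  have m2: "m \<ge> 2" and mP: "m \<ge> P / lam" by (auto simp: m_def)
  show ?thesis
  proof (intro exI[of _ "m powr P"] conjI allI impI)
    show "m powr P > 0" using m2 by simp
    fix u :: real assume u: "u \<ge> 0"
    have "0 \<le> (u - 1)\<^sup>2" by simp
    then have "u \<le> 1 + u\<^sup>2" using u by (simp add: power2_eq_square algebra_simps)
    then have "1 + u \<le> 2 + u\<^sup>2" by simp
    also have "u\<^sup>2 = (P / lam) * (lam * u\<^sup>2 / P)" using P l by (simp add: field_simps)
    also have "(P / lam) * (lam * u\<^sup>2 / P) \<le> m * (lam * u\<^sup>2 / P)"
      by (rule mult_right_mono) (use mP P l in auto)
    also have "2 + m * (lam * u\<^sup>2 / P) \<le> m * (1 + lam * u\<^sup>2 / P)" using m2 by (simp add: algebra_simps)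
    finally have 1: "1 + u \<le> m * (1 + lam * u\<^sup>2 / P)" by simp
    have "(1 + u) powr P \<le> (m * (1 + lam * u\<^sup>2 / P)) powr P"
      by (rule powr_mono2) (use P u 1 in auto)
    also have "\<dots> = m powr P * (1 + lam * u\<^sup>2 / P) powr P"
      using m2 P l by (simp add: powr_mult)
    also have "(1 + lam * u\<^sup>2 / P) powr P \<le> (exp (lam * u\<^sup>2 / P)) powr P"
      by (rule powr_mono2) (use P l in \<open>auto intro: add_nonneg_nonneg\<close>)
    also have "(exp (lam * u\<^sup>2 / P)) powr P = exp (lam * u\<^sup>2)"
      using P by (simp add: exp_powr_real)
    finally show "(1 + u) powr P \<le> m powr P * exp (lam * u\<^sup>2)"
      using m2 by (simp add: mult_left_mono)
  qed
qed

lemma xi_le_eta: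
  fixes al lam :: real assumes al: "al > 0" and l: "lam > 0"
  shows "\<exists>C1>0. \<forall>t>0. \<forall>x::'a::euclidean_space. xi lam 0 t x \<le> C1 * eta al al t x"
proof -
  define D where "D = real DIM('a)"
  define P where "P = D + al"
  have P: "P > 0" using al by (simp add: P_def D_def)
  obtain K where K: "K > 0" "\<And>u. u \<ge> 0 \<Longrightarrow> (1 + u) powr P \<le> K * exp (lam * u\<^sup>2)"
    using polyexp[OF P l] by blast
  show ?thesis
  proof (intro exI[of _ K] conjI allI impI K(1))
    fix t :: real and x :: 'a assume t: "t > 0"
    define h where "h = sqrt t"
    have h: "h > 0" using t by (simp add: h_def)
    define u where "u = norm x / h"
    have u: "u \<ge> 0" using h by (simp add: u_def)
    have nx: "norm x + h = h * (1 + u)" using h by (simp add: u_def field_simps)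
    have u2: "lam * (norm x)\<^sup>2 / t = lam * u\<^sup>2"
      using h t by (simp add: u_def h_def power_divide)
    define T where "T = t powr (- D / 2)"
    have T: "T > 0" using t by (simp add: T_def)
    have xi: "xi lam 0 t x = T * exp (- (lam * u\<^sup>2))"
      using u2 by (simp add: xi0 T_def D_def)
    have "eta al al t x = t powr (al / 2) * (h powr (- P) * (1 + u) powr (- P))"
      using h u by (simp add: eta_def nx[unfolded h_def] powr_mult P_def D_def h_def)
    also have "h powr (- P) = t powr (- P / 2)"
      using t by (simp add: h_def powr_half_sqrt[symmetric] powr_powr)
    also have "t powr (al / 2) * (t powr (- P / 2) * (1 + u) powr (- P)) = T * (1 + u) powr (- P)"
      by (simp add: T_def P_def powr_add[symmetric] mult.assoc[symmetric] diff_divide_distrib add_divide_distrib)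
    finally have eta: "eta al al t x = T * (1 + u) powr (- P)" .
    have Q: "(1 + u) powr P > 0" using u by simp
    have "exp (- (lam * u\<^sup>2)) \<le> K * (1 + u) powr (- P)"
    proof -
      have "(1 + u) powr P \<le> K * exp (lam * u\<^sup>2)" using K(2)[OF u] .
      then have "1 / exp (lam * u\<^sup>2) \<le> K / (1 + u) powr P"
        using Q K(1) by (simp add: field_simps)
      then show ?thesis by (simp add: exp_minus powr_minus_divide inverse_eq_divide)
    qed
    then have "T * exp (- (lam * u\<^sup>2)) \<le> T * (K * (1 + u) powr (- P))"
      using T by (simp add: mult_left_mono)
    then show "xi lam 0 t x \<le> K * eta al al t x" by (simp add: xi eta algebra_simps)
  qed
qed



lemma ball_lower:
  fixes f :: "'a::euclidean_space \<Rightarrow> real"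
  assumes r: "r \<ge> 0" and m: "m \<ge> 0" and f: "\<And>z. z \<in> ball c r \<Longrightarrow> m \<le> f z"
  shows "ennreal (m * (unit_ball_vol (real DIM('a)) * r ^ DIM('a))) \<le> (\<integral>\<^sup>+z. ennreal (f z) \<partial>lborel)"
proof -
  have "ennreal (m * (unit_ball_vol (real DIM('a)) * r ^ DIM('a))) = ennreal m * emeasure lborel (ball c r)"
    using r m by (simp add: emeasure_ball ennreal_mult)
  also have "\<dots> = (\<integral>\<^sup>+z. ennreal m * indicator (ball c r) z \<partial>lborel)"
    by (rule nn_integral_cmult_indicator[symmetric]) simp
  also have "\<dots> \<le> (\<integral>\<^sup>+z. ennreal (f z) \<partial>lborel)"
  proof (intro nn_integral_mono)
    fix z show "ennreal m * indicator (ball c r) z \<le> ennreal (f z)"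
    proof (cases "z \<in> ball c r")
      case True then show ?thesis using f[OF True] by (simp add: ennreal_leI)
    qed simp
  qed
  finally show ?thesis .
qed

lemma halfpow:
  fixes g al T u :: real
  assumes g: "0 \<le> g" "g \<le> al" and T: "T > 0" and u: "u > 0" and Tu: "T \<le> 2 * u"
  shows "2 powr (- al / 2) * T powr (g / 2) \<le> u powr (g / 2)"
proof -
  have "T powr (g / 2) \<le> (2 * u) powr (g / 2)" by (rule powr_mono2) (use g T Tu in auto)
  also have "\<dots> = 2 powr (g / 2) * u powr (g / 2)" using u by (simp add: powr_mult)
  finally have 1: "2 powr (- al / 2) * T powr (g / 2) \<le> 2 powr (- al / 2) * (2 powr (g / 2) * u powr (g / 2))"
    by (simp add: mult_left_mono)
  have "2 powr (- al / 2) * 2 powr (g / 2) = 2 powr ((g - al) / 2)" by (simp add: powr_add[symmetric] diff_divide_distrib)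
  also have "\<dots> \<le> 2 powr 0" by (rule powr_mono) (use g in auto)
  finally have 2: "2 powr (- al / 2) * 2 powr (g / 2) \<le> (1::real)" by simp
  have 3: "2 powr (- al / 2) * (2 powr (g / 2) * u powr (g / 2)) \<le> 1 * u powr (g / 2)"
    unfolding mult.assoc[symmetric] by (rule mult_right_mono[OF 2]) simp
  show ?thesis using order_trans[OF 1 3] by simp
qed

lemma sc:
  fixes tau D al :: real and n :: nat
  assumes tau: "tau > 0" and Dn: "D = real n"
  shows "(2 * sqrt tau) powr (- (D + al)) * sqrt tau ^ n = 2 powr (- (D + al)) * tau powr (- al / 2)"
proof -
  have h: "sqrt tau > 0" using tau by simp
  have "(2 * sqrt tau) powr (- (D + al)) * sqrt tau ^ n = 2 powr (- (D + al)) * (sqrt tau powr (- (D + al)) * sqrt tau powr D)"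
    using h by (simp add: powr_mult Dn powr_realpow)
  also have "sqrt tau powr (- (D + al)) * sqrt tau powr D = sqrt tau powr (- al)"
    by (subst powr_add[symmetric]) simp
  also have "sqrt tau powr (- al) = tau powr (- al / 2)"
    using tau by (simp add: powr_half_sqrt[symmetric] powr_powr)
  finally show ?thesis .
qed

lemma lower:
  fixes al :: real assumes al: "al > 0"
  shows "\<exists>C3>0. \<forall>t>0. \<forall>s>0. \<forall>x::'a::euclidean_space. \<forall>g\<in>{0..al}.
     (\<integral>\<^sup>+z. ennreal (eta al g t (x - z) * eta al al s z) \<partial>lborel) \<ge> ennreal (C3 * eta al g (t + s) x)"
proof -
  define D where "D = real DIM('a)"
  define P where "P = D + al"
  define V where "V = unit_ball_vol D"
  have V: "V > 0" by (simp add: V_def D_def)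
  have P: "P > 0" using al by (simp add: P_def D_def)
  define C3 where "C3 = 2 powr (- P) * 2 powr (- P) * 2 powr (- al / 2) * V"
  show ?thesis
  proof (intro exI[of _ C3] conjI allI impI ballI)
    show "C3 > 0" using V by (simp add: C3_def)
    fix t s :: real and x :: 'a and g assume t: "t > 0" and s: "s > 0" and g: "g \<in> {0..al}"
    have g0: "0 \<le> g" "g \<le> al" using g by auto
    define R where "R = norm x + sqrt (t + s)"
    have R: "R > 0" using t s by (simp add: R_def pos_ns)
    have sts: "sqrt s \<le> sqrt (t + s)" "sqrt t \<le> sqrt (t + s)" using t s by auto
    have tgt: "eta al g (t + s) x = (t + s) powr (g / 2) * R powr (- P)"
      by (simp add: eta_def R_def P_def D_def)
    have mono: "B powr (- P) \<ge> A powr (- P)" if "0 < B" "B \<le> A" for A B :: real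
      by (rule powr_mono2') (use that P in auto)
    show "ennreal (C3 * eta al g (t + s) x) \<le> (\<integral>\<^sup>+z. ennreal (eta al g t (x - z) * eta al al s z) \<partial>lborel)"
    proof (cases "s \<le> t")
      case True
      define m where "m = (s powr (al / 2) * (2 * sqrt s) powr (- P)) * (t powr (g / 2) * (2 * R) powr (- P))"
      have m0: "m \<ge> 0" by (simp add: m_def)
      have pw: "m \<le> eta al g t (x - z) * eta al al s z" if z: "z \<in> ball 0 (sqrt s)" for z
      proof -
        have nz: "norm z < sqrt s" using z by simp
        have 1: "s powr (al / 2) * (2 * sqrt s) powr (- P) \<le> eta al al s z"
          unfolding eta_def P_def[symmetric] D_def[symmetric]
          by (intro mult_left_mono mono) (use nz s in \<open>auto intro: pos_ns\<close>)
        have "norm (x - z) + sqrt t \<le> 2 * R"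
          using norm_triangle_ineq4[of x z] nz sts norm_ge_zero[of x] unfolding R_def by (smt (verit))
        then have 2: "t powr (g / 2) * (2 * R) powr (- P) \<le> eta al g t (x - z)"
          unfolding eta_def P_def[symmetric] D_def[symmetric]
          by (intro mult_left_mono mono) (use t in \<open>auto intro: pos_ns\<close>)
        have "m \<le> eta al al s z * eta al g t (x - z)" unfolding m_def using 1 2 by (intro mult_mono) (auto simp: eta_def)
        then show ?thesis by (simp add: mult.commute)
      qed
      have "ennreal (m * (V * sqrt s ^ DIM('a))) \<le> (\<integral>\<^sup>+z. ennreal (eta al g t (x - z) * eta al al s z) \<partial>lborel)"
        unfolding V_def D_def by (rule ball_lower[where c=0]) (use m0 pw s in auto)
      moreover have "C3 * eta al g (t + s) x \<le> m * (V * sqrt s ^ DIM('a))"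
      proof -
        have e1: "s powr (al / 2) * (2 * sqrt s) powr (- P) * sqrt s ^ DIM('a) = 2 powr (- P)"
          using sc[OF s, of D "DIM('a)" al] s by (simp add: P_def D_def mult.assoc powr_add[symmetric])
        have "m * (V * sqrt s ^ DIM('a)) = (s powr (al / 2) * (2 * sqrt s) powr (- P) * sqrt s ^ DIM('a)) * (t powr (g / 2) * (2 * R) powr (- P)) * V"
          by (simp add: m_def algebra_simps)
        also have "\<dots> = 2 powr (- P) * t powr (g / 2) * 2 powr (- P) * R powr (- P) * V"
          unfolding e1 using R by (simp add: powr_mult algebra_simps)
        finally have m: "m * (V * sqrt s ^ DIM('a)) = 2 powr (- P) * t powr (g / 2) * 2 powr (- P) * R powr (- P) * V" .
        have h: "2 powr (- al / 2) * (t + s) powr (g / 2) \<le> t powr (g / 2)"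
          by (rule halfpow) (use g0 t s True in auto)
        have "C3 * eta al g (t + s) x = (2 powr (- al / 2) * (t + s) powr (g / 2)) * (2 powr (- P) * 2 powr (- P) * R powr (- P) * V)"
          unfolding tgt C3_def by (simp add: algebra_simps)
        also have "\<dots> \<le> t powr (g / 2) * (2 powr (- P) * 2 powr (- P) * R powr (- P) * V)"
          by (rule mult_right_mono[OF h]) (use V in simp)
        finally show ?thesis unfolding m by (simp add: algebra_simps)
      qed
      ultimately show ?thesis using order_trans ennreal_leI by blast
    next
      case False
      define m where "m = (t powr (g / 2) * (2 * sqrt t) powr (- P)) * (s powr (al / 2) * (2 * R) powr (- P))"
      have m0: "m \<ge> 0" by (simp add: m_def)
      have pw: "m \<le> eta al g t (x - z) * eta al al s z" if z: "z \<in> ball x (sqrt t)" for z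
      proof -
        have nz: "norm (x - z) < sqrt t" using z by (simp add: dist_norm)
        have 1: "t powr (g / 2) * (2 * sqrt t) powr (- P) \<le> eta al g t (x - z)"
          unfolding eta_def P_def[symmetric] D_def[symmetric]
          by (intro mult_left_mono mono) (use nz t in \<open>auto intro: pos_ns\<close>)
        have "norm z \<le> norm x + norm (x - z)" using norm_triangle_ineq2[of z x] norm_minus_commute[of z x] by simp
        then have "norm z + sqrt s \<le> 2 * R"
          using nz sts norm_ge_zero[of x] unfolding R_def by (smt (verit))
        then have 2: "s powr (al / 2) * (2 * R) powr (- P) \<le> eta al al s z"
          unfolding eta_def P_def[symmetric] D_def[symmetric]
          by (intro mult_left_mono mono) (use s in \<open>auto intro: pos_ns\<close>)
        show ?thesis unfolding m_def using 1 2 by (intro mult_mono) (auto simp: eta_def)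
      qed
      have "ennreal (m * (V * sqrt t ^ DIM('a))) \<le> (\<integral>\<^sup>+z. ennreal (eta al g t (x - z) * eta al al s z) \<partial>lborel)"
        unfolding V_def D_def by (rule ball_lower[where c=x]) (use m0 pw t in auto)
      moreover have "C3 * eta al g (t + s) x \<le> m * (V * sqrt t ^ DIM('a))"
      proof -
        have e1: "t powr (g / 2) * (2 * sqrt t) powr (- P) * sqrt t ^ DIM('a) = 2 powr (- P) * t powr ((g - al) / 2)"
          using sc[OF t, of D "DIM('a)" al] t by (simp add: P_def D_def mult.assoc powr_add[symmetric] diff_divide_distrib)
        have "m * (V * sqrt t ^ DIM('a)) = (t powr (g / 2) * (2 * sqrt t) powr (- P) * sqrt t ^ DIM('a)) * (s powr (al / 2) * (2 * R) powr (- P)) * V"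
          by (simp add: m_def algebra_simps)
        also have "\<dots> = 2 powr (- P) * (t powr ((g - al) / 2) * s powr (al / 2)) * 2 powr (- P) * R powr (- P) * V"
          unfolding e1 using R by (simp add: powr_mult algebra_simps)
        finally have m: "m * (V * sqrt t ^ DIM('a)) = 2 powr (- P) * (t powr ((g - al) / 2) * s powr (al / 2)) * 2 powr (- P) * R powr (- P) * V" .
        have h: "2 powr (- al / 2) * (t + s) powr (g / 2) \<le> s powr (g / 2)"
          by (rule halfpow) (use g0 t s False in auto)
        have "s powr ((g - al) / 2) \<le> t powr ((g - al) / 2)"
          by (rule powr_mono2') (use g0 t False in auto)
        then have "s powr ((g - al) / 2) * s powr (al / 2) \<le> t powr ((g - al) / 2) * s powr (al / 2)"
          by (rule mult_right_mono) simp
        moreover have "s powr ((g - al) / 2) * s powr (al / 2) = s powr (g / 2)"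
          by (simp add: powr_add[symmetric] diff_divide_distrib)
        ultimately have h2: "2 powr (- al / 2) * (t + s) powr (g / 2) \<le> t powr ((g - al) / 2) * s powr (al / 2)"
          using h by simp
        have "C3 * eta al g (t + s) x = (2 powr (- al / 2) * (t + s) powr (g / 2)) * (2 powr (- P) * 2 powr (- P) * R powr (- P) * V)"
          unfolding tgt C3_def by (simp add: algebra_simps)
        also have "\<dots> \<le> (t powr ((g - al) / 2) * s powr (al / 2)) * (2 powr (- P) * 2 powr (- P) * R powr (- P) * V)"
          by (rule mult_right_mono[OF h2]) (use V in simp)
        finally show ?thesis unfolding m by (simp add: algebra_simps)
      qed
      ultimately show ?thesis using order_trans ennreal_leI by blast
    qed
  qed
qed



lemma eta_meas[measurable]: "eta al g t \<in> borel_measurable (borel :: 'a::euclidean_space measure)"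
  unfolding eta_def by measurable

lemma xi_meas[measurable]: "xi lam g t \<in> borel_measurable (borel :: 'a::euclidean_space measure)"
  unfolding xi_def by measurable

lemma xi_nonneg[simp]: "xi lam g t x \<ge> 0"
  by (simp add: xi_def)

lemma eta_nonneg[simp]: "eta al g t x \<ge> 0"
  by (simp add: eta_def)

lemma part4a:
  fixes lam :: real assumes l: "lam > 0"
  shows "\<forall>t > 0. \<forall>s > 0. \<forall>x::'a::euclidean_space.
          (\<integral>\<^sup>+ y. ennreal (xi lam 0 t (x - y) * xi lam 0 s y) \<partial>lborel)
            = ennreal ((pi / lam) powr (real DIM('a) / 2) * xi lam 0 (t + s) x)"
proof (intro allI impI)
  fix t s :: real and x :: 'a assume t: "t > 0" and s: "s > 0"
  have "(\<integral>\<^sup>+ y. ennreal (xi lam 0 t (x - y) * xi lam 0 s y) \<partial>lborel)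
     = (\<integral>\<^sup>+ y. ennreal (xi lam 0 s (y - 0) * xi lam 0 t (x - y)) \<partial>lborel)"
    by (simp add: mult.commute)
  also have "\<dots> = ennreal ((pi / lam) powr (real DIM('a) / 2) * xi lam 0 (s + t) (x - 0))"
    by (rule xiconv[OF l s t])
  finally show "(\<integral>\<^sup>+ y. ennreal (xi lam 0 t (x - y) * xi lam 0 s y) \<partial>lborel)
            = ennreal ((pi / lam) powr (real DIM('a) / 2) * xi lam 0 (t + s) x)" by (simp add: add.commute)
qed

lemma part4b:
  fixes lam :: real assumes l: "lam > 0"
  shows "\<forall>gam1 gam2 t s. \<forall>x y::'a::euclidean_space. gam1 > -2 \<and> gam2 > -2 \<and> 0 \<le> t \<and> t < s \<longrightarrow>
          (\<integral>\<^sup>+ r \<in> {t<..<s}. (\<integral>\<^sup>+ z. ennreal (xi lam gam1 (r - t) (z - x) * xi lam gam2 (s - r) (y - z)) \<partial>lborel) \<partial>lborel)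
            = ennreal ((pi / lam) powr (real DIM('a) / 2) * Beta (gam1 / 2 + 1) (gam2 / 2 + 1)
                        * xi lam (2 + gam1 + gam2) (s - t) (y - x))"
proof (intro allI impI, elim conjE)
  fix g1 g2 t s :: real and x y :: 'a
  assume g1: "g1 > -2" and g2: "g2 > -2" and t0: "0 \<le> t" and ts: "t < s"
  define W where "W = (pi / lam) powr (real DIM('a) / 2) * xi lam 0 (s - t) (y - x)"
  have W: "W \<ge> 0" by (simp add: W_def xi_def)
  have inner: "(\<integral>\<^sup>+ z. ennreal (xi lam g1 (r - t) (z - x) * xi lam g2 (s - r) (y - z)) \<partial>lborel)
      = ennreal W * ennreal ((r - t) powr (g1 / 2) * (s - r) powr (g2 / 2))" if r: "t < r" "r < s" for r
  proof -
    have a: "r - t > 0" and b: "s - r > 0" using r by auto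
    have "(\<integral>\<^sup>+ z. ennreal (xi lam g1 (r - t) (z - x) * xi lam g2 (s - r) (y - z)) \<partial>lborel)
        = (\<integral>\<^sup>+ z. ennreal ((r - t) powr (g1 / 2) * (s - r) powr (g2 / 2)) * ennreal (xi lam 0 (r - t) (z - x) * xi lam 0 (s - r) (y - z)) \<partial>lborel)"
      by (intro nn_integral_cong) (simp add: xi_gam[OF a, of _ g1] xi_gam[OF b, of _ g2] ennreal_mult[symmetric] algebra_simps)
    also have "\<dots> = ennreal ((r - t) powr (g1 / 2) * (s - r) powr (g2 / 2)) * (\<integral>\<^sup>+ z. ennreal (xi lam 0 (r - t) (z - x) * xi lam 0 (s - r) (y - z)) \<partial>lborel)"
      by (rule nn_integral_cmult) measurable
    also have "(\<integral>\<^sup>+ z. ennreal (xi lam 0 (r - t) (z - x) * xi lam 0 (s - r) (y - z)) \<partial>lborel) = ennreal W"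
      using xiconv[OF l a b, of x y] by (simp add: W_def)
    finally show ?thesis by (simp add: mult.commute)
  qed
  have "(\<integral>\<^sup>+ r \<in> {t<..<s}. (\<integral>\<^sup>+ z. ennreal (xi lam g1 (r - t) (z - x) * xi lam g2 (s - r) (y - z)) \<partial>lborel) \<partial>lborel)
      = (\<integral>\<^sup>+ r. ennreal W * (ennreal ((r - t) powr (g1 / 2) * (s - r) powr (g2 / 2)) * indicator {t<..<s} r) \<partial>lborel)"
  proof (intro nn_integral_cong)
    fix r :: real
    show "(\<integral>\<^sup>+ z. ennreal (xi lam g1 (r - t) (z - x) * xi lam g2 (s - r) (y - z)) \<partial>lborel) * indicator {t<..<s} r
       = ennreal W * (ennreal ((r - t) powr (g1 / 2) * (s - r) powr (g2 / 2)) * indicator {t<..<s} r)"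
      by (cases "r \<in> {t<..<s}") (simp_all add: inner mult.assoc)
  qed
  also have "\<dots> = ennreal W * (\<integral>\<^sup>+ r\<in>{t<..<s}. ennreal ((r - t) powr (g1 / 2) * (s - r) powr (g2 / 2)) \<partial>lborel)"
    by (rule nn_integral_cmult) measurable
  also have "\<dots> = ennreal W * ennreal ((s - t) powr (g1 / 2 + g2 / 2 + 1) * Beta (g1 / 2 + 1) (g2 / 2 + 1))"
    by (subst beta_nn) (use g1 g2 ts in auto)
  also have "\<dots> = ennreal ((pi / lam) powr (real DIM('a) / 2) * Beta (g1 / 2 + 1) (g2 / 2 + 1) * xi lam (2 + g1 + g2) (s - t) (y - x))"
  proof -
    have st: "s - t > 0" using ts by simp
    have "(s - t) powr (g1 / 2 + g2 / 2 + 1) = (s - t) powr ((2 + g1 + g2) / 2)" by (simp add: field_simps)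
    then have "W * ((s - t) powr (g1 / 2 + g2 / 2 + 1) * Beta (g1 / 2 + 1) (g2 / 2 + 1))
        = (pi / lam) powr (real DIM('a) / 2) * Beta (g1 / 2 + 1) (g2 / 2 + 1) * xi lam (2 + g1 + g2) (s - t) (y - x)"
      by (subst xi_gam[OF st, of _ "2 + g1 + g2"]) (simp add: W_def algebra_simps)
    moreover have "Beta (g1 / 2 + 1) (g2 / 2 + 1) \<ge> 0" using Beta_pos[of "g1 / 2 + 1" "g2 / 2 + 1"] g1 g2 by simp
    ultimately show ?thesis using W ts by (simp add: ennreal_mult[symmetric])
  qed
  finally show "(\<integral>\<^sup>+ r \<in> {t<..<s}. (\<integral>\<^sup>+ z. ennreal (xi lam g1 (r - t) (z - x) * xi lam g2 (s - r) (y - z)) \<partial>lborel) \<partial>lborel)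
            = ennreal ((pi / lam) powr (real DIM('a) / 2) * Beta (g1 / 2 + 1) (g2 / 2 + 1)
                        * xi lam (2 + g1 + g2) (s - t) (y - x))" .
qed



lemma eta_int2:
  fixes al :: real assumes al: "al > 0"
  shows "\<exists>K\<ge>0. \<forall>t>0. \<forall>c::'a::euclidean_space.
     (\<integral>\<^sup>+z. ennreal (eta al 0 t (c - z)) \<partial>lborel) \<le> ennreal (K * t powr (- al / 2)) \<and>
     (\<integral>\<^sup>+z. ennreal (eta al 0 t (z - c)) \<partial>lborel) \<le> ennreal (K * t powr (- al / 2))"
proof -
  obtain K where K: "K \<ge> 0" "\<forall>t>0. \<forall>c::'a. (\<integral>\<^sup>+z. ennreal ((dist c z + sqrt t) powr (- (real DIM('a) + al))) \<partial>lborel) \<le> ennreal (K * t powr (- al / 2))"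
    using eta_int[OF al] by blast
  show ?thesis
  proof (intro exI[of _ K] conjI allI impI K(1))
    fix t :: real and c :: 'a assume t: "t > 0"
    have 1: "eta al 0 t (c - z) = (dist c z + sqrt t) powr (- (real DIM('a) + al))" for z
      using t by (simp add: eta0 dist_norm)
    have 2: "eta al 0 t (z - c) = (dist c z + sqrt t) powr (- (real DIM('a) + al))" for z
      using t by (simp add: eta0 dist_norm norm_minus_commute)
    show "(\<integral>\<^sup>+z. ennreal (eta al 0 t (c - z)) \<partial>lborel) \<le> ennreal (K * t powr (- al / 2))"
      unfolding 1 using K(2) t by blast
    show "(\<integral>\<^sup>+z. ennreal (eta al 0 t (z - c)) \<partial>lborel) \<le> ennreal (K * t powr (- al / 2))"
      unfolding 2 using K(2) t by blast
  qed
qed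

lemma inner_gen:
  fixes x y :: "'a::euclidean_space" and F :: "'a \<Rightarrow> real"
  assumes al: "0 < al" and ab: "al \<le> be" and K: "K \<ge> 0"
    and KK: "\<forall>t>0. \<forall>c::'a.
     (\<integral>\<^sup>+z. ennreal (eta be 0 t (c - z)) \<partial>lborel) \<le> ennreal (K * t powr (- be / 2)) \<and>
     (\<integral>\<^sup>+z. ennreal (eta be 0 t (z - c)) \<partial>lborel) \<le> ennreal (K * t powr (- be / 2))"
    and a: "a > 0" and b: "b > 0" and W: "W \<ge> 0"
    and F: "\<And>z. F z \<le> W * (eta al 0 a (y - z) * eta be 0 b (z - x))"
  shows "(\<integral>\<^sup>+z. ennreal (F z) \<partial>lborel)
     \<le> ennreal (W * 2 powr (real DIM('a) + al) * eta al 0 (a + b) (y - x) * K * (a powr (- be / 2) + b powr (- be / 2)))"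
proof -
  define M where "M = W * 2 powr (real DIM('a) + al) * eta al 0 (a + b) (y - x)"
  have M: "M \<ge> 0" using W by (simp add: M_def)
  have "(\<integral>\<^sup>+z. ennreal (F z) \<partial>lborel) \<le> (\<integral>\<^sup>+z. ennreal M * (ennreal (eta be 0 a (y - z)) + ennreal (eta be 0 b (z - x))) \<partial>lborel)"
  proof (intro nn_integral_mono)
    fix z
    have "F z \<le> W * (2 powr (real DIM('a) + al) * (eta be 0 a (y - z) + eta be 0 b (z - x)) * eta al 0 (a + b) (y - z + (z - x)))"
      using F[of z] eta_pw[OF al ab a b, of "y - z" "z - x"] W by (meson mult_left_mono order_trans)
    also have "y - z + (z - x) = y - x" by simp
    finally have "F z \<le> M * (eta be 0 a (y - z) + eta be 0 b (z - x))" by (simp add: M_def algebra_simps)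
    then have "ennreal (F z) \<le> ennreal (M * (eta be 0 a (y - z) + eta be 0 b (z - x)))" by (rule ennreal_leI)
    also have "\<dots> = ennreal M * (ennreal (eta be 0 a (y - z)) + ennreal (eta be 0 b (z - x)))"
      using M by (simp add: ennreal_mult ennreal_plus)
    finally show "ennreal (F z) \<le> ennreal M * (ennreal (eta be 0 a (y - z)) + ennreal (eta be 0 b (z - x)))" .
  qed
  also have "\<dots> = ennreal M * ((\<integral>\<^sup>+z. ennreal (eta be 0 a (y - z)) \<partial>lborel) + (\<integral>\<^sup>+z. ennreal (eta be 0 b (z - x)) \<partial>lborel))"
    by (subst nn_integral_cmult, measurable, subst nn_integral_add, measurable)
  also have "\<dots> \<le> ennreal M * (ennreal (K * a powr (- be / 2)) + ennreal (K * b powr (- be / 2)))"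
    using KK a b by (intro mult_left_mono add_mono) auto
  also have "\<dots> = ennreal (M * K * (a powr (- be / 2) + b powr (- be / 2)))"
    using M K by (simp add: ennreal_mult[symmetric] algebra_simps)
  finally show ?thesis by (simp add: M_def)
qed

lemma mixbound:
  fixes a b g1 g2 be :: real assumes a: "a > 0" and b: "b > 0" and be: "be \<ge> 0"
  shows "a powr (g1 / 2) * b powr (g2 / 2) * (a powr (- be / 2) + b powr (- be / 2))
     \<le> 2 * (a + b) powr (be / 2) * (a powr ((g1 - be) / 2) * b powr ((g2 - be) / 2))"
proof -
  define X where "X = a powr ((g1 - be) / 2) * b powr ((g2 - be) / 2)"
  have X: "X \<ge> 0" by (simp add: X_def)
  have ea: "a powr (g1 / 2) * a powr (- be / 2) = a powr ((g1 - be) / 2)" by (simp add: powr_add[symmetric] diff_divide_distrib)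
  have eb: "b powr (g2 / 2) * b powr (- be / 2) = b powr ((g2 - be) / 2)" by (simp add: powr_add[symmetric] diff_divide_distrib)
  have fa: "a powr (g1 / 2) = a powr ((g1 - be) / 2) * a powr (be / 2)" by (simp add: powr_add[symmetric] diff_divide_distrib)
  have fb: "b powr (g2 / 2) = b powr ((g2 - be) / 2) * b powr (be / 2)" by (simp add: powr_add[symmetric] diff_divide_distrib)
  have 1: "a powr (g1 / 2) * b powr (g2 / 2) * a powr (- be / 2) = X * b powr (be / 2)"
  proof -
    have "a powr (g1 / 2) * b powr (g2 / 2) * a powr (- be / 2) = (a powr (g1 / 2) * a powr (- be / 2)) * b powr (g2 / 2)" by (simp only: mult_ac)
    also have "\<dots> = a powr ((g1 - be) / 2) * (b powr ((g2 - be) / 2) * b powr (be / 2))" by (simp only: ea fb)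
    finally show ?thesis by (simp only: X_def mult_ac)
  qed
  have 2: "a powr (g1 / 2) * b powr (g2 / 2) * b powr (- be / 2) = X * a powr (be / 2)"
  proof -
    have "a powr (g1 / 2) * b powr (g2 / 2) * b powr (- be / 2) = a powr (g1 / 2) * (b powr (g2 / 2) * b powr (- be / 2))" by (simp only: mult_ac)
    also have "\<dots> = (a powr ((g1 - be) / 2) * a powr (be / 2)) * b powr ((g2 - be) / 2)" by (simp only: eb fa)
    finally show ?thesis by (simp only: X_def mult_ac)
  qed
  have 3: "b powr (be / 2) \<le> (a + b) powr (be / 2)" by (rule powr_mono2) (use a b be in auto)
  have 4: "a powr (be / 2) \<le> (a + b) powr (be / 2)" by (rule powr_mono2) (use a b be in auto)
  have "a powr (g1 / 2) * b powr (g2 / 2) * (a powr (- be / 2) + b powr (- be / 2)) = X * b powr (be / 2) + X * a powr (be / 2)"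
    unfolding distrib_left 1 2 ..
  also have "\<dots> \<le> X * (a + b) powr (be / 2) + X * (a + b) powr (be / 2)"
    using X 3 4 by (intro add_mono mult_left_mono) auto
  finally show ?thesis by (simp add: X_def algebra_simps)
qed



lemma part1:
  fixes alpha :: real assumes al: "alpha > 0"
  shows "(\<forall>lam > 0. \<exists>C1. \<forall>t > 0. \<forall>x::'a::euclidean_space. xi lam 0 t x \<le> C1 * eta alpha alpha t x)
      \<and> (\<exists>C2. \<forall>gam \<ge> 0. \<forall>t > 0.
            (\<integral>\<^sup>+ x. ennreal (eta alpha gam t (x::'a)) \<partial>lborel) \<le> ennreal (C2 * t powr ((gam - alpha) / 2)))
      \<and> (\<exists>C3 > 0. \<forall>t > 0. \<forall>s > 0. \<forall>x::'a. \<forall>gam \<in> {0..alpha}.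
            (\<integral>\<^sup>+ z. ennreal (eta alpha gam t (x - z) * eta alpha alpha s z) \<partial>lborel)
              \<ge> ennreal (C3 * eta alpha gam (t + s) x))"
proof (intro conjI allI impI)
  fix lam :: real assume "lam > 0"
  then show "\<exists>C1. \<forall>t > 0. \<forall>x::'a. xi lam 0 t x \<le> C1 * eta alpha alpha t x"
    using xi_le_eta[OF al] by blast
next
  show "\<exists>C3 > 0. \<forall>t > 0. \<forall>s > 0. \<forall>x::'a. \<forall>gam \<in> {0..alpha}.
            (\<integral>\<^sup>+ z. ennreal (eta alpha gam t (x - z) * eta alpha alpha s z) \<partial>lborel)
              \<ge> ennreal (C3 * eta alpha gam (t + s) x)"
    using lower[OF al] by blast
next
  obtain K where K: "K \<ge> 0" "\<forall>t>0. \<forall>c::'a.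
     (\<integral>\<^sup>+z. ennreal (eta alpha 0 t (c - z)) \<partial>lborel) \<le> ennreal (K * t powr (- alpha / 2)) \<and>
     (\<integral>\<^sup>+z. ennreal (eta alpha 0 t (z - c)) \<partial>lborel) \<le> ennreal (K * t powr (- alpha / 2))"
    using eta_int2[OF al] by blast
  show "\<exists>C2. \<forall>gam \<ge> 0. \<forall>t > 0.
            (\<integral>\<^sup>+ x. ennreal (eta alpha gam t (x::'a)) \<partial>lborel) \<le> ennreal (C2 * t powr ((gam - alpha) / 2))"
  proof (intro exI[of _ K] allI impI)
    fix gam t :: real assume t: "t > 0"
    have "(\<integral>\<^sup>+ x. ennreal (eta alpha gam t (x::'a)) \<partial>lborel) = (\<integral>\<^sup>+ x. ennreal (t powr (gam / 2)) * ennreal (eta alpha 0 t (x - 0::'a)) \<partial>lborel)"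
      by (intro nn_integral_cong) (simp add: eta_gam[OF t, of _ gam] ennreal_mult)
    also have "\<dots> = ennreal (t powr (gam / 2)) * (\<integral>\<^sup>+ x. ennreal (eta alpha 0 t (x - 0::'a)) \<partial>lborel)"
      by (rule nn_integral_cmult) measurable
    also have "\<dots> \<le> ennreal (t powr (gam / 2)) * ennreal (K * t powr (- alpha / 2))"
    proof (rule mult_left_mono)
      show "(\<integral>\<^sup>+ x. ennreal (eta alpha 0 t (x - 0::'a)) \<partial>lborel) \<le> ennreal (K * t powr (- alpha / 2))"
        using K(2) t by blast
    qed simp
    also have "\<dots> = ennreal (K * t powr ((gam - alpha) / 2))"
      using K(1) by (simp add: ennreal_mult[symmetric] powr_add[symmetric] diff_divide_distrib algebra_simps)
    finally show "(\<integral>\<^sup>+ x. ennreal (eta alpha gam t (x::'a)) \<partial>lborel) \<le> ennreal (K * t powr ((gam - alpha) / 2))" .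
  qed
qed

lemma part2:
  fixes alpha beta :: real assumes al: "0 < alpha" and ab: "alpha \<le> beta"
  shows "(\<forall>t > 0. \<forall>s > 0. \<forall>x y::'a::euclidean_space.
          eta alpha 0 t x * eta beta 0 s y
            \<le> 2 powr (real DIM('a) + alpha) * (eta beta 0 t x + eta beta 0 s y) * eta alpha 0 (t + s) (x + y))
    \<and> (\<exists>C4. \<forall>gam1 gam2 t s. \<forall>x y::'a. gam1 > beta - 2 \<and> gam2 > beta - 2 \<and> 0 \<le> t \<and> t < s \<longrightarrow>
          (\<integral>\<^sup>+ r \<in> {t<..<s}. (\<integral>\<^sup>+ z. ennreal (eta alpha gam1 (s - r) (y - z) * eta beta gam2 (r - t) (z - x)) \<partial>lborel) \<partial>lborel)
            \<le> ennreal (C4 * Beta ((gam1 - beta) / 2 + 1) ((gam2 - beta) / 2 + 1)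
                        * eta alpha (2 + gam1 + gam2 - beta) (s - t) (y - x)))"
proof (intro conjI allI impI)
  fix t s :: real and x y :: 'a assume "t > 0" "s > 0"
  then show "eta alpha 0 t x * eta beta 0 s y
            \<le> 2 powr (real DIM('a) + alpha) * (eta beta 0 t x + eta beta 0 s y) * eta alpha 0 (t + s) (x + y)"
    using eta_pw[OF al ab] by blast
next
  have be: "beta > 0" using al ab by simp
  obtain K where K: "K \<ge> 0" "\<forall>t>0. \<forall>c::'a.
     (\<integral>\<^sup>+z. ennreal (eta beta 0 t (c - z)) \<partial>lborel) \<le> ennreal (K * t powr (- beta / 2)) \<and>
     (\<integral>\<^sup>+z. ennreal (eta beta 0 t (z - c)) \<partial>lborel) \<le> ennreal (K * t powr (- beta / 2))"
    using eta_int2[OF be] by blast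
  define P where "P = 2 powr (real DIM('a) + alpha)"
  have P: "P \<ge> 0" by (simp add: P_def)
  show "\<exists>C4. \<forall>gam1 gam2 t s. \<forall>x y::'a. gam1 > beta - 2 \<and> gam2 > beta - 2 \<and> 0 \<le> t \<and> t < s \<longrightarrow>
          (\<integral>\<^sup>+ r \<in> {t<..<s}. (\<integral>\<^sup>+ z. ennreal (eta alpha gam1 (s - r) (y - z) * eta beta gam2 (r - t) (z - x)) \<partial>lborel) \<partial>lborel)
            \<le> ennreal (C4 * Beta ((gam1 - beta) / 2 + 1) ((gam2 - beta) / 2 + 1)
                        * eta alpha (2 + gam1 + gam2 - beta) (s - t) (y - x))"
  proof (intro exI[of _ "P * K * 2"] allI impI, elim conjE)
    fix g1 g2 t s :: real and x y :: 'a
    assume g1: "g1 > beta - 2" and g2: "g2 > beta - 2" and t0: "0 \<le> t" and ts: "t < s"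
    define E where "E = eta alpha 0 (s - t) (y - x)"
    have E: "E \<ge> 0" by (simp add: E_def)
    define Q where "Q = P * E * K * 2 * (s - t) powr (beta / 2)"
    have Q: "Q \<ge> 0" using P E K by (simp add: Q_def)
    have inner: "(\<integral>\<^sup>+ z. ennreal (eta alpha g1 (s - r) (y - z) * eta beta g2 (r - t) (z - x)) \<partial>lborel)
        \<le> ennreal (Q * ((r - t) powr ((g2 - beta) / 2) * (s - r) powr ((g1 - beta) / 2)))" if r: "t < r" "r < s" for r
    proof -
      have a: "s - r > 0" and b: "r - t > 0" using r by auto
      define W where "W = (s - r) powr (g1 / 2) * (r - t) powr (g2 / 2)"
      have W: "W \<ge> 0" by (simp add: W_def)
      have "(\<integral>\<^sup>+ z. ennreal (eta alpha g1 (s - r) (y - z) * eta beta g2 (r - t) (z - x)) \<partial>lborel)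
         \<le> ennreal (W * 2 powr (real DIM('a) + alpha) * eta alpha 0 ((s - r) + (r - t)) (y - x) * K * ((s - r) powr (- beta / 2) + (r - t) powr (- beta / 2)))"
        by (rule inner_gen[OF al ab K(1) K(2) a b W])
          (simp add: W_def eta_gam[OF a, of _ g1] eta_gam[OF b, of _ g2] algebra_simps)
      also have "W * 2 powr (real DIM('a) + alpha) * eta alpha 0 ((s - r) + (r - t)) (y - x) * K * ((s - r) powr (- beta / 2) + (r - t) powr (- beta / 2))
          = P * E * K * (W * ((s - r) powr (- beta / 2) + (r - t) powr (- beta / 2)))"
        by (simp add: P_def E_def algebra_simps)
      also have "\<dots> \<le> P * E * K * (2 * ((s - r) + (r - t)) powr (beta / 2) * ((s - r) powr ((g1 - beta) / 2) * (r - t) powr ((g2 - beta) / 2)))"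
        unfolding W_def by (intro mult_left_mono mixbound) (use a b be P E K in auto)
      also have "\<dots> = Q * ((r - t) powr ((g2 - beta) / 2) * (s - r) powr ((g1 - beta) / 2))"
        by (simp add: Q_def algebra_simps)
      finally show ?thesis by (simp add: ennreal_leI)
    qed
    have "(\<integral>\<^sup>+ r \<in> {t<..<s}. (\<integral>\<^sup>+ z. ennreal (eta alpha g1 (s - r) (y - z) * eta beta g2 (r - t) (z - x)) \<partial>lborel) \<partial>lborel)
       \<le> ennreal (Q * ((s - t) powr ((g2 - beta) / 2 + (g1 - beta) / 2 + 1) * Beta ((g2 - beta) / 2 + 1) ((g1 - beta) / 2 + 1)))"
      by (rule outer_bound[OF ts _ _ Q inner]) (use g1 g2 in auto)
    also have "Q * ((s - t) powr ((g2 - beta) / 2 + (g1 - beta) / 2 + 1) * Beta ((g2 - beta) / 2 + 1) ((g1 - beta) / 2 + 1))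
        = P * K * 2 * Beta ((g1 - beta) / 2 + 1) ((g2 - beta) / 2 + 1) * eta alpha (2 + g1 + g2 - beta) (s - t) (y - x)"
    proof -
      have st: "s - t > 0" using ts by simp
      have "(s - t) powr (beta / 2) * (s - t) powr ((g2 - beta) / 2 + (g1 - beta) / 2 + 1) = (s - t) powr ((2 + g1 + g2 - beta) / 2)"
      proof -
        have "beta / 2 + ((g2 - beta) / 2 + (g1 - beta) / 2 + 1) = (2 + g1 + g2 - beta) / 2" by (simp add: field_simps)
        then show ?thesis by (simp only: powr_add[symmetric])
      qed
      then show ?thesis
        by (subst eta_gam[OF st, of _ "2 + g1 + g2 - beta"]) (simp add: Q_def E_def Beta_commute algebra_simps)
    qed
    finally show "(\<integral>\<^sup>+ r \<in> {t<..<s}. (\<integral>\<^sup>+ z. ennreal (eta alpha g1 (s - r) (y - z) * eta beta g2 (r - t) (z - x)) \<partial>lborel) \<partial>lborel)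
            \<le> ennreal (P * K * 2 * Beta ((g1 - beta) / 2 + 1) ((g2 - beta) / 2 + 1)
                        * eta alpha (2 + g1 + g2 - beta) (s - t) (y - x))" .
  qed
qed

lemma part3:
  fixes alpha lam :: real assumes al: "0 < alpha" and l: "lam > 0"
  shows "\<exists>C5. \<forall>gam1 gam2 t s. \<forall>x y::'a::euclidean_space. gam1 > -2 \<and> gam2 > alpha - 2 \<and> 0 \<le> t \<and> t < s \<longrightarrow>
          (\<integral>\<^sup>+ r \<in> {t<..<s}. (\<integral>\<^sup>+ z. ennreal (xi lam gam1 (r - t) (z - x) * eta alpha gam2 (s - r) (y - z)) \<partial>lborel) \<partial>lborel)
            \<le> ennreal (C5 * Beta (gam1 / 2 + 1) ((gam2 - alpha) / 2 + 1)
                        * eta alpha (2 + gam1 + gam2) (s - t) (y - x))"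
proof -
  obtain C1 where C1: "C1 > 0" "\<forall>t>0. \<forall>x::'a. xi lam 0 t x \<le> C1 * eta alpha alpha t x"
    using xi_le_eta[OF al l] by blast
  obtain K where K: "K \<ge> 0" "\<forall>t>0. \<forall>c::'a.
     (\<integral>\<^sup>+z. ennreal (eta alpha 0 t (c - z)) \<partial>lborel) \<le> ennreal (K * t powr (- alpha / 2)) \<and>
     (\<integral>\<^sup>+z. ennreal (eta alpha 0 t (z - c)) \<partial>lborel) \<le> ennreal (K * t powr (- alpha / 2))"
    using eta_int2[OF al] by blast
  define P where "P = 2 powr (real DIM('a) + alpha)"
  have P: "P \<ge> 0" by (simp add: P_def)
  show ?thesis
  proof (intro exI[of _ "C1 * P * K * 2"] allI impI, elim conjE)
    fix g1 g2 t s :: real and x y :: 'a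
    assume g1: "g1 > -2" and g2: "g2 > alpha - 2" and t0: "0 \<le> t" and ts: "t < s"
    define E where "E = eta alpha 0 (s - t) (y - x)"
    have E: "E \<ge> 0" by (simp add: E_def)
    define Q where "Q = C1 * P * E * K * 2 * (s - t) powr (alpha / 2)"
    have Q: "Q \<ge> 0" using C1 P E K by (simp add: Q_def)
    have inner: "(\<integral>\<^sup>+ z. ennreal (xi lam g1 (r - t) (z - x) * eta alpha g2 (s - r) (y - z)) \<partial>lborel)
        \<le> ennreal (Q * ((r - t) powr (g1 / 2) * (s - r) powr ((g2 - alpha) / 2)))" if r: "t < r" "r < s" for r
    proof -
      have a: "s - r > 0" and b: "r - t > 0" using r by auto
      define W where "W = C1 * ((r - t) powr ((g1 + alpha) / 2) * (s - r) powr (g2 / 2))"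
      have W: "W \<ge> 0" using C1 by (simp add: W_def)
      have pw: "xi lam g1 (r - t) (z - x) * eta alpha g2 (s - r) (y - z) \<le> W * (eta alpha 0 (s - r) (y - z) * eta alpha 0 (r - t) (z - x))" for z
      proof -
        have "xi lam g1 (r - t) (z - x) = (r - t) powr (g1 / 2) * xi lam 0 (r - t) (z - x)" by (rule xi_gam[OF b])
        also have "\<dots> \<le> (r - t) powr (g1 / 2) * (C1 * eta alpha alpha (r - t) (z - x))"
          using C1(2) b by (intro mult_left_mono) auto
        also have "eta alpha alpha (r - t) (z - x) = (r - t) powr (alpha / 2) * eta alpha 0 (r - t) (z - x)" by (rule eta_gam[OF b])
        also have "(r - t) powr (g1 / 2) * (C1 * ((r - t) powr (alpha / 2) * eta alpha 0 (r - t) (z - x)))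
            = C1 * (r - t) powr ((g1 + alpha) / 2) * eta alpha 0 (r - t) (z - x)"
          by (simp add: powr_add[symmetric] add_divide_distrib algebra_simps)
        finally have 1: "xi lam g1 (r - t) (z - x) \<le> C1 * (r - t) powr ((g1 + alpha) / 2) * eta alpha 0 (r - t) (z - x)" .
        have 2: "eta alpha g2 (s - r) (y - z) = (s - r) powr (g2 / 2) * eta alpha 0 (s - r) (y - z)" by (rule eta_gam[OF a])
        have "xi lam g1 (r - t) (z - x) * eta alpha g2 (s - r) (y - z)
            \<le> C1 * (r - t) powr ((g1 + alpha) / 2) * eta alpha 0 (r - t) (z - x) * eta alpha g2 (s - r) (y - z)"
          by (rule mult_right_mono[OF 1]) simp
        also have "\<dots> = W * (eta alpha 0 (s - r) (y - z) * eta alpha 0 (r - t) (z - x))"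
          unfolding 2 W_def by (simp add: algebra_simps)
        finally show ?thesis .
      qed
      have "(\<integral>\<^sup>+ z. ennreal (xi lam g1 (r - t) (z - x) * eta alpha g2 (s - r) (y - z)) \<partial>lborel)
         \<le> ennreal (W * 2 powr (real DIM('a) + alpha) * eta alpha 0 ((s - r) + (r - t)) (y - x) * K * ((s - r) powr (- alpha / 2) + (r - t) powr (- alpha / 2)))"
        by (rule inner_gen[OF al order_refl K(1) K(2) a b W pw])
      also have "W * 2 powr (real DIM('a) + alpha) * eta alpha 0 ((s - r) + (r - t)) (y - x) * K * ((s - r) powr (- alpha / 2) + (r - t) powr (- alpha / 2))
          = C1 * P * E * K * ((r - t) powr ((g1 + alpha) / 2) * (s - r) powr (g2 / 2) * ((r - t) powr (- alpha / 2) + (s - r) powr (- alpha / 2)))"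
        by (simp add: P_def E_def W_def algebra_simps)
      also have "\<dots> \<le> C1 * P * E * K * (2 * ((r - t) + (s - r)) powr (alpha / 2) * ((r - t) powr ((g1 + alpha - alpha) / 2) * (s - r) powr ((g2 - alpha) / 2)))"
        by (intro mult_left_mono mixbound) (use a b al C1 P E K in auto)
      also have "\<dots> = Q * ((r - t) powr (g1 / 2) * (s - r) powr ((g2 - alpha) / 2))"
        by (simp add: Q_def algebra_simps)
      finally show ?thesis by (simp add: ennreal_leI)
    qed
    have "(\<integral>\<^sup>+ r \<in> {t<..<s}. (\<integral>\<^sup>+ z. ennreal (xi lam g1 (r - t) (z - x) * eta alpha g2 (s - r) (y - z)) \<partial>lborel) \<partial>lborel)
       \<le> ennreal (Q * ((s - t) powr (g1 / 2 + (g2 - alpha) / 2 + 1) * Beta (g1 / 2 + 1) ((g2 - alpha) / 2 + 1)))"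
      by (rule outer_bound[OF ts _ _ Q inner]) (use g1 g2 in auto)
    also have "Q * ((s - t) powr (g1 / 2 + (g2 - alpha) / 2 + 1) * Beta (g1 / 2 + 1) ((g2 - alpha) / 2 + 1))
        = C1 * P * K * 2 * Beta (g1 / 2 + 1) ((g2 - alpha) / 2 + 1) * eta alpha (2 + g1 + g2) (s - t) (y - x)"
    proof -
      have st: "s - t > 0" using ts by simp
      have "(s - t) powr (alpha / 2) * (s - t) powr (g1 / 2 + (g2 - alpha) / 2 + 1) = (s - t) powr ((2 + g1 + g2) / 2)"
      proof -
        have "alpha / 2 + (g1 / 2 + (g2 - alpha) / 2 + 1) = (2 + g1 + g2) / 2" by (simp add: field_simps)
        then show ?thesis by (simp only: powr_add[symmetric])
      qed
      then show ?thesis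
        by (subst eta_gam[OF st, of _ "2 + g1 + g2"]) (simp add: Q_def E_def algebra_simps)
    qed
    finally show "(\<integral>\<^sup>+ r \<in> {t<..<s}. (\<integral>\<^sup>+ z. ennreal (xi lam g1 (r - t) (z - x) * eta alpha g2 (s - r) (y - z)) \<partial>lborel) \<partial>lborel)
            \<le> ennreal (C1 * P * K * 2 * Beta (g1 / 2 + 1) ((g2 - alpha) / 2 + 1)
                        * eta alpha (2 + g1 + g2) (s - t) (y - x))" .
  qed
qed


theorem lemma2p1:
  assumes d2: "DIM('a::euclidean_space) \<ge> 2"
  shows
  \<comment> \<open>(i)\<close>
  "(\<forall>alpha > 0. (\<forall>lam > 0. \<exists>C1. \<forall>t > 0. \<forall>x::'a. xi lam 0 t x \<le> C1 * eta alpha alpha t x)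
      \<and> (\<exists>C2. \<forall>gam \<ge> 0. \<forall>t > 0.
            (\<integral>\<^sup>+ x. ennreal (eta alpha gam t (x::'a)) \<partial>lborel) \<le> ennreal (C2 * t powr ((gam - alpha) / 2)))
      \<and> (\<exists>C3 > 0. \<forall>t > 0. \<forall>s > 0. \<forall>x::'a. \<forall>gam \<in> {0..alpha}.
            (\<integral>\<^sup>+ z. ennreal (eta alpha gam t (x - z) * eta alpha alpha s z) \<partial>lborel)
              \<ge> ennreal (C3 * eta alpha gam (t + s) x)))
   \<and>
   \<comment> \<open>(ii)\<close>
   (\<forall>alpha beta. 0 < alpha \<and> alpha \<le> beta \<longrightarrow>
      (\<forall>t > 0. \<forall>s > 0. \<forall>x y::'a.
          eta alpha 0 t x * eta beta 0 s y
            \<le> 2 powr (real DIM('a) + alpha) * (eta beta 0 t x + eta beta 0 s y) * eta alpha 0 (t + s) (x + y))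
    \<and> (\<exists>C4. \<forall>gam1 gam2 t s. \<forall>x y::'a. gam1 > beta - 2 \<and> gam2 > beta - 2 \<and> 0 \<le> t \<and> t < s \<longrightarrow>
          (\<integral>\<^sup>+ r \<in> {t<..<s}. (\<integral>\<^sup>+ z. ennreal (eta alpha gam1 (s - r) (y - z) * eta beta gam2 (r - t) (z - x)) \<partial>lborel) \<partial>lborel)
            \<le> ennreal (C4 * Beta ((gam1 - beta) / 2 + 1) ((gam2 - beta) / 2 + 1)
                        * eta alpha (2 + gam1 + gam2 - beta) (s - t) (y - x))))
   \<and>
   \<comment> \<open>(iii)\<close>
   (\<forall>alpha lam. 0 < alpha \<and> alpha < 2 \<and> lam > 0 \<longrightarrow>
      (\<exists>C5. \<forall>gam1 gam2 t s. \<forall>x y::'a. gam1 > -2 \<and> gam2 > alpha - 2 \<and> 0 \<le> t \<and> t < s \<longrightarrow>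
          (\<integral>\<^sup>+ r \<in> {t<..<s}. (\<integral>\<^sup>+ z. ennreal (xi lam gam1 (r - t) (z - x) * eta alpha gam2 (s - r) (y - z)) \<partial>lborel) \<partial>lborel)
            \<le> ennreal (C5 * Beta (gam1 / 2 + 1) ((gam2 - alpha) / 2 + 1)
                        * eta alpha (2 + gam1 + gam2) (s - t) (y - x))))
   \<and>
   \<comment> \<open>(iv)\<close>
   (\<forall>lam > 0.
      (\<forall>t > 0. \<forall>s > 0. \<forall>x::'a.
          (\<integral>\<^sup>+ y. ennreal (xi lam 0 t (x - y) * xi lam 0 s y) \<partial>lborel)
            = ennreal ((pi / lam) powr (real DIM('a) / 2) * xi lam 0 (t + s) x))
    \<and> (\<forall>gam1 gam2 t s. \<forall>x y::'a. gam1 > -2 \<and> gam2 > -2 \<and> 0 \<le> t \<and> t < s \<longrightarrow>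
          (\<integral>\<^sup>+ r \<in> {t<..<s}. (\<integral>\<^sup>+ z. ennreal (xi lam gam1 (r - t) (z - x) * xi lam gam2 (s - r) (y - z)) \<partial>lborel) \<partial>lborel)
            = ennreal ((pi / lam) powr (real DIM('a) / 2) * Beta (gam1 / 2 + 1) (gam2 / 2 + 1)
                        * xi lam (2 + gam1 + gam2) (s - t) (y - x))))"
    apply (intro conjI)
  subgoal by (intro allI impI) (erule part1)
  subgoal by (intro allI impI, elim conjE) (erule part2, assumption)
  subgoal by (intro allI impI, elim conjE) (erule part3, assumption)
  subgoal apply (intro allI impI conjI) subgoal using part4a by blast subgoal using part4b by blast done
  done

end
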